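(* Let $R$ be a semilocal commutative ring in which $2$ is invertible and $n\ge3$. Equip $R^{2n+1}$ with the standard form of matrix $\tilde\phi_{2n+1}=(2)\perp\widetilde{\psi}_n$. Let $u,v\in R^{2n+1}$ where $u$ is an isotropic unimodular vector with $\langle u,v\rangle=0$. Then $\sigma_{u,v}\in\mathrm{EO}_{2n+1}(R)$.
   Context: $e_{i,j}$ are matrix units and $\widetilde{\psi}_s=\sum_{i=1}^s(e_{2i-1,2i}+e_{2i,2i-1})$. On $R^{2n+1}$ the bilinear form is $\langle a,b\rangle=a^t\tilde\phi_{2n+1}b$ and the quadratic form is $q(a)=\tfrac12\langle a,a\rangle$. For $u,v$ with $u$ unimodular, $q(u)=0$, $\langle u,v\rangle=0$ and $r=q(v)$, the Eichler–Siegel–Dickson transvection is $\sigma_{u,v}(x)=x+\langle v,x\rangle u-\langle u,x\rangle v-r\langle u,x\rangle u$. Odd elementary orthogonal group: for $N=2s+1$ and $1\le i\le s$, $\lambda\in R$, $F^1_i(\lambda)=I_N+\lambda(e_{1,2i+1}-2e_{2i,1}-\lambda e_{2i,2i+1})$, $F^2_i(\lambda)=I_N+\lambda(e_{1,2i}-2e_{2i+1,1}-\lambda e_{2i+1,2i})$; $\mathrm{EO}_{2s+1}(R)$ is the group they generate. *)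

theory Defs
  imports "Jordan_Normal_Form.Matrix"
begin

definition ring_ideal :: "'a::comm_ring_1 set \<Rightarrow> bool" where
  "ring_ideal I \<longleftrightarrow> 0 \<in> I \<and> (\<forall>x\<in>I. \<forall>y\<in>I. x + y \<in> I) \<and> (\<forall>r x. x \<in> I \<longrightarrow> r * x \<in> I)"

definition maximal_ideal :: "'a::comm_ring_1 set \<Rightarrow> bool" where
  "maximal_ideal M \<longleftrightarrow> ring_ideal M \<and> M \<noteq> UNIV \<and>
     (\<forall>J. ring_ideal J \<and> M \<subseteq> J \<longrightarrow> J = M \<or> J = UNIV)"

definition semilocal :: "'a::comm_ring_1 itself \<Rightarrow> bool" where
  "semilocal _ \<longleftrightarrow> finite {M :: 'a set. maximal_ideal M}"

(* Matrix units e_{i,j} (1-based, as in the paper) of size N x N *)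
definition unit_mat :: "nat \<Rightarrow> nat \<Rightarrow> nat \<Rightarrow> 'a::comm_ring_1 mat" where
  "unit_mat N i j = mat N N (\<lambda>(a,b). if a = i - 1 \<and> b = j - 1 then 1 else 0)"

definition psi_tilde :: "nat \<Rightarrow> 'a::comm_ring_1 mat" where
  "psi_tilde s = mat (2*s) (2*s) (\<lambda>(a,b). \<Sum>i\<in>{1..s}.
      (unit_mat (2*s) (2*i-1) (2*i) + unit_mat (2*s) (2*i) (2*i-1)) $$ (a,b))"

definition phi_tilde :: "nat \<Rightarrow> 'a::comm_ring_1 mat" where
  "phi_tilde n = four_block_mat (mat 1 1 (\<lambda>_. 2)) (0\<^sub>m 1 (2*n)) (0\<^sub>m (2*n) 1) (psi_tilde n)"

definition bform :: "nat \<Rightarrow> 'a::comm_ring_1 vec \<Rightarrow> 'a vec \<Rightarrow> 'a" where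
  "bform n a b = a \<bullet> (phi_tilde n *\<^sub>v b)"

(* quadratic form q(a) = (1/2)<a,a>, i.e. the unique r with 2 r = <a,a>
   (2 is assumed invertible where this is used) *)
definition qform :: "nat \<Rightarrow> 'a::comm_ring_1 vec \<Rightarrow> 'a" where
  "qform n a = (THE r. 2 * r = bform n a a)"

definition unimodular :: "'a::comm_ring_1 vec \<Rightarrow> bool" where
  "unimodular u \<longleftrightarrow> (\<exists>w. dim_vec w = dim_vec u \<and> u \<bullet> w = 1)"

definition esd :: "nat \<Rightarrow> 'a::comm_ring_1 vec \<Rightarrow> 'a vec \<Rightarrow> 'a vec \<Rightarrow> 'a vec" where
  "esd n u v x = x + bform n v x \<cdot>\<^sub>v u - bform n u x \<cdot>\<^sub>v v - (qform n v * bform n u x) \<cdot>\<^sub>v u"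

definition esd_mat :: "nat \<Rightarrow> 'a::comm_ring_1 vec \<Rightarrow> 'a vec \<Rightarrow> 'a mat" where
  "esd_mat n u v = mat_of_cols (2*n+1) (map (\<lambda>j. esd n u v (unit_vec (2*n+1) j)) [0..<2*n+1])"

definition F1 :: "nat \<Rightarrow> nat \<Rightarrow> 'a::comm_ring_1 \<Rightarrow> 'a mat" where
  "F1 s i c = 1\<^sub>m (2*s+1) + c \<cdot>\<^sub>m (unit_mat (2*s+1) 1 (2*i+1) - 2 \<cdot>\<^sub>m unit_mat (2*s+1) (2*i) 1
      - c \<cdot>\<^sub>m unit_mat (2*s+1) (2*i) (2*i+1))"

definition F2 :: "nat \<Rightarrow> nat \<Rightarrow> 'a::comm_ring_1 \<Rightarrow> 'a mat" where
  "F2 s i c = 1\<^sub>m (2*s+1) + c \<cdot>\<^sub>m (unit_mat (2*s+1) 1 (2*i) - 2 \<cdot>\<^sub>m unit_mat (2*s+1) (2*i+1) 1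
      - c \<cdot>\<^sub>m unit_mat (2*s+1) (2*i+1) (2*i))"

definition EO_gens :: "nat \<Rightarrow> 'a::comm_ring_1 mat set" where
  "EO_gens s = {F1 s i c | i c. 1 \<le> i \<and> i \<le> s} \<union> {F2 s i c | i c. 1 \<le> i \<and> i \<le> s}"

inductive_set EO :: "nat \<Rightarrow> 'a::comm_ring_1 mat set" for s where
  EO_one: "1\<^sub>m (2*s+1) \<in> EO s"
| EO_gen: "g \<in> EO_gens s \<Longrightarrow> M \<in> EO s \<Longrightarrow> g * M \<in> EO s"
| EO_inv: "g \<in> EO_gens s \<Longrightarrow> h \<in> carrier_mat (2*s+1) (2*s+1) \<Longrightarrow> g * h = 1\<^sub>m (2*s+1)
           \<Longrightarrow> h * g = 1\<^sub>m (2*s+1) \<Longrightarrow> M \<in> EO s \<Longrightarrow> h * M \<in> EO s"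

end

theory Submission
  imports Defs
begin

lemma ideal_0: "ring_ideal I \<Longrightarrow> 0 \<in> I" by (simp add: ring_ideal_def)
lemma ideal_add: "ring_ideal I \<Longrightarrow> x \<in> I \<Longrightarrow> y \<in> I \<Longrightarrow> x + y \<in> I" by (simp add: ring_ideal_def)
lemma ideal_multl: "ring_ideal I \<Longrightarrow> x \<in> I \<Longrightarrow> r * x \<in> I" by (simp add: ring_ideal_def)
lemma ideal_multr: "ring_ideal I \<Longrightarrow> x \<in> I \<Longrightarrow> x * r \<in> I"
  by (metis ideal_multl mult.commute)
lemma ideal_neg: "ring_ideal I \<Longrightarrow> x \<in> I \<Longrightarrow> - x \<in> I"
  using ideal_multl[of I x "-1"] by simp
lemma ideal_diff: "ring_ideal I \<Longrightarrow> x \<in> I \<Longrightarrow> y \<in> I \<Longrightarrow> x - y \<in> I"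
  using ideal_add[of I x "-y"] ideal_neg[of I y] by simp
lemma ideal_sum: assumes I: "ring_ideal I"
  shows "finite S \<Longrightarrow> (\<And>x. x\<in>S \<Longrightarrow> f x \<in> I) \<Longrightarrow> sum f S \<in> I"
  by (induction S rule: finite_induct) (auto intro: ideal_0[OF I] ideal_add[OF I])

lemma max_ideal: "maximal_ideal m \<Longrightarrow> ring_ideal m" by (simp add: maximal_ideal_def)

lemma max_one: "maximal_ideal (m::'a::comm_ring_1 set) \<Longrightarrow> 1 \<notin> m"
proof
  assume m: "maximal_ideal m" and "1 \<in> m"
  then have "\<And>r. r \<in> m" using ideal_multl[of m 1] max_ideal by fastforce
  then show False using m by (auto simp: maximal_ideal_def)
qed

lemma max_extend:
  fixes m :: "'a::comm_ring_1 set"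
  assumes m: "maximal_ideal m" and a: "a \<notin> m"
  shows "\<exists>x\<in>m. \<exists>r. x + a * r = 1"
proof -
  let ?J = "{x + a * r | x r. x \<in> m}"
  have I: "ring_ideal m" using m max_ideal by auto
  have J: "ring_ideal ?J"
    unfolding ring_ideal_def
  proof (intro conjI ballI allI impI)
    have "0 + a * 0 \<in> ?J" using ideal_0[OF I] by blast
    then show "0 \<in> ?J" by simp
    fix x y assume "x \<in> ?J" "y \<in> ?J"
    then obtain x1 r1 x2 r2 where "x = x1 + a * r1" "y = x2 + a*r2" "x1 \<in> m" "x2 \<in> m" by blast
    then show "x + y \<in> ?J"
      by (intro CollectI exI[of _ "x1+x2"] exI[of _ "r1+r2"]) (auto simp: algebra_simps intro: ideal_add[OF I])
  next
    fix r x assume "x \<in> ?J"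
    then obtain x1 r1 where "x = x1 + a * r1" "x1 \<in> m" by blast
    then show "r * x \<in> ?J"
      by (intro CollectI exI[of _ "r*x1"] exI[of _ "r*r1"]) (auto simp: algebra_simps intro: ideal_multl[OF I])
  qed
  have sub: "m \<subseteq> ?J"
  proof
    fix y assume "y \<in> m"
    then have "y + a * 0 \<in> ?J" by blast
    then show "y \<in> ?J" by simp
  qed
  have "a \<in> ?J" using ideal_0[OF I] by (intro CollectI exI[of _ 0] exI[of _ 1]) auto
  then have "?J \<noteq> m" using a by blast
  then have "?J = UNIV" using m J sub unfolding maximal_ideal_def by blast
  then have "1 \<in> ?J" by blast
  then obtain x r where "1 = x + a * r" "x \<in> m" by blast
  then show ?thesis by metis
qed

lemma max_prime:
  fixes m :: "'a::comm_ring_1 set"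
  assumes m: "maximal_ideal m" and ab: "a * b \<in> m"
  shows "a \<in> m \<or> b \<in> m"
proof (rule ccontr)
  assume "\<not> (a \<in> m \<or> b \<in> m)"
  then have a: "a \<notin> m" and b: "b \<notin> m" by auto
  obtain x r where x: "x \<in> m" "x + a * r = 1" using max_extend[OF m a] by blast
  have I: "ring_ideal m" using m max_ideal by auto
  have "b = b * (x + a * r)" using x(2) by simp
  also have "\<dots> = x * b + (a * b) * r" by (simp add: algebra_simps)
  also have "\<dots> \<in> m" using ideal_add[OF I ideal_multr[OF I x(1)] ideal_multr[OF I ab]] .
  finally show False using b by simp
qed

lemma comax:
  fixes m m' :: "'a::comm_ring_1 set"
  assumes m: "maximal_ideal m" and m': "maximal_ideal m'" and ne: "m \<noteq> m'"
  shows "\<exists>b\<in>m'. b - 1 \<in> m"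
proof -
  have "\<not> m' \<subseteq> m"
  proof
    assume "m' \<subseteq> m"
    then have "m = m' \<or> m = UNIV" using m' m max_ideal unfolding maximal_ideal_def by blast
    then show False using ne m max_one by blast
  qed
  then obtain b where b: "b \<in> m'" "b \<notin> m" by blast
  obtain x r where x: "x \<in> m" "x + b * r = 1" using max_extend[OF m b(2)] by blast
  have "b * r \<in> m'" using b m' max_ideal ideal_multr by blast
  moreover have "b * r - 1 \<in> m" using x m max_ideal ideal_neg
    by (metis add_diff_cancel_right' diff_add_cancel minus_diff_eq)
  ultimately show ?thesis by blast
qed

lemma prod_cong_one:
  fixes m :: "'a::comm_ring_1 set"
  assumes I: "ring_ideal m"
  shows "finite S \<Longrightarrow> (\<And>x. x \<in> S \<Longrightarrow> f x - 1 \<in> m) \<Longrightarrow> prod f S - 1 \<in> m"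
proof (induction S rule: finite_induct)
  case empty then show ?case using ideal_0[OF I] by simp
next
  case (insert x F)
  have "prod f (insert x F) - 1 = (f x - 1) * prod f F + (prod f F - 1)"
    using insert by (simp add: algebra_simps)
  also have "\<dots> \<in> m" using insert I by (intro ideal_add ideal_multr) auto
  finally show ?case .
qed

lemma separator:
  fixes M :: "'a::comm_ring_1 set set"
  assumes fin: "finite M" and MM: "\<And>m. m \<in> M \<Longrightarrow> maximal_ideal m" and mM: "m \<in> M"
  shows "\<exists>e. e - 1 \<in> m \<and> (\<forall>m'\<in>M - {m}. e \<in> m')"
proof -
  have "\<forall>m'\<in>M - {m}. \<exists>b\<in>m'. b - 1 \<in> m" using comax MM mM by blast
  then obtain b where b: "\<And>m'. m' \<in> M - {m} \<Longrightarrow> b m' \<in> m' \<and> b m' - 1 \<in> m" by metis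
  let ?e = "prod b (M - {m})"
  have "?e - 1 \<in> m" using prod_cong_one[OF max_ideal[OF MM[OF mM]]] fin b by blast
  moreover have "\<forall>m'\<in>M - {m}. ?e \<in> m'"
  proof
    fix m' assume m': "m' \<in> M - {m}"
    have "?e = b m' * prod b (M - {m} - {m'})" using fin m' by (simp add: prod.remove)
    also have "\<dots> \<in> m'" using b[OF m'] MM m' max_ideal ideal_multr by blast
    finally show "?e \<in> m'" .
  qed
  ultimately show ?thesis by blast
qed

lemma unit_of_not_max:
  fixes x :: "'a::comm_ring_1"
  assumes H: "\<And>m. maximal_ideal m \<Longrightarrow> x \<notin> m"
  shows "\<exists>y. x * y = 1"
proof (rule ccontr)
  assume nu: "\<nexists>y. x * y = 1"
  let ?I = "{x * r | r. True}"
  let ?A = "{J. ring_ideal J \<and> ?I \<subseteq> J \<and> 1 \<notin> J}"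
  have Iid: "ring_ideal ?I" unfolding ring_ideal_def
  proof (intro conjI ballI allI impI)
    show "0 \<in> ?I" by (intro CollectI exI[of _ 0]) simp
    fix a b assume "a \<in> ?I" "b \<in> ?I"
    then obtain r s where "a = x * r" "b = x * s" by blast
    then show "a + b \<in> ?I" by (intro CollectI exI[of _ "r+s"]) (simp add: distrib_left)
  next
    fix c a assume "a \<in> ?I"
    then obtain r where "a = x * r" by blast
    then show "c * a \<in> ?I" by (intro CollectI exI[of _ "c*r"]) (simp add: mult.left_commute)
  qed
  have IA: "?I \<in> ?A" using Iid nu by auto
  have "\<exists>M\<in>?A. \<forall>X\<in>?A. M \<subseteq> X \<longrightarrow> X = M"
  proof (rule Zorn_Lemma2, intro ballI)
    fix C assume C: "C \<in> chains ?A"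
    show "\<exists>U\<in>?A. \<forall>X\<in>C. X \<subseteq> U"
    proof (cases "C = {}")
      case True then show ?thesis using IA by blast
    next
      case False
      have CA: "C \<subseteq> ?A" and ch: "\<And>X Y. X \<in> C \<Longrightarrow> Y \<in> C \<Longrightarrow> X \<subseteq> Y \<or> Y \<subseteq> X"
        using C unfolding chains_def chain_subset_def by auto
      have "ring_ideal (\<Union>C)" unfolding ring_ideal_def
      proof (intro conjI ballI allI impI)
        obtain X where "X \<in> C" using False by blast
        then show "0 \<in> \<Union>C" using CA ideal_0 by blast
      next
        fix a b assume "a \<in> \<Union>C" "b \<in> \<Union>C"
        then obtain X Y where XY: "X \<in> C" "Y \<in> C" "a \<in> X" "b \<in> Y" by blast
        show "a + b \<in> \<Union>C"
          using ch[OF XY(1,2)] XY CA ideal_add by (metis (no_types, lifting) CollectD UnionI subset_iff)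
      next
        fix r a assume "a \<in> \<Union>C"
        then obtain X where "X \<in> C" "a \<in> X" by blast
        then show "r * a \<in> \<Union>C" using CA ideal_multl by blast
      qed
      moreover have "?I \<subseteq> \<Union>C" "1 \<notin> \<Union>C" using CA False by auto
      ultimately show ?thesis by blast
    qed
  qed
  then obtain M where MA: "M \<in> ?A" and Mmax: "\<forall>X\<in>?A. M \<subseteq> X \<longrightarrow> X = M" by blast
  have "maximal_ideal M" unfolding maximal_ideal_def
  proof (intro conjI allI impI)
    show "ring_ideal M" using MA by blast
    show "M \<noteq> UNIV" using MA by blast
    fix J assume J: "ring_ideal J \<and> M \<subseteq> J"
    show "J = M \<or> J = UNIV"
    proof (cases "1 \<in> J")
      case True
      then have "\<And>r. r \<in> J" using J ideal_multl[of J 1] by fastforce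
      then show ?thesis by blast
    next
      case False
      then have "J \<in> ?A" using J MA by blast
      then show ?thesis using Mmax J by blast
    qed
  qed
  moreover have "x \<in> M"
  proof -
    have "x * 1 \<in> ?I" by blast
    then show ?thesis using MA by auto
  qed
  ultimately show False using H by blast
qed

definition pp :: "nat \<Rightarrow> nat" where "pp j = (if odd j then j + 1 else j - 1)"

lemma pp_range: assumes "j \<in> {1..2*n}" shows "pp j \<in> {1..2*n}"
proof (cases "odd j")
  case True
  have "1 \<le> j" "j \<le> 2*n" using assms by auto
  then have "j < 2*n" using True by presburger
  then show ?thesis using True unfolding pp_def by auto
next
  case False
  have "1 \<le> j" "j \<le> 2*n" using assms by auto
  then have "j \<ge> 2" using False by presburger
  then show ?thesis using False assms unfolding pp_def by auto
qed
lemma pp_ge1: "1 \<le> j \<Longrightarrow> 1 \<le> pp j"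
  unfolding pp_def by presburger
lemma pp_lt: "1 \<le> j \<Longrightarrow> j < 2*n+1 \<Longrightarrow> pp j < 2*n+1"
  using pp_range[of j n] by auto
lemma pp_pp: "j \<ge> 1 \<Longrightarrow> pp (pp j) = j"
  unfolding pp_def by (auto elim: oddE)
lemma pp_neq: "1 \<le> j \<Longrightarrow> pp j \<noteq> j"
  unfolding pp_def by auto
lemma pp_pos: "pp j \<noteq> 0 \<or> j = 0 \<or> j = 1"
  unfolding pp_def by auto

lemma psi_dim[simp]: "dim_row (psi_tilde n) = 2*n" "dim_col (psi_tilde n) = 2*n"
  unfolding psi_tilde_def by auto

lemma unit_mat_dim[simp]: "dim_row (unit_mat N i j) = N" "dim_col (unit_mat N i j) = N"
  unfolding unit_mat_def by auto
lemma unit_mat_entry: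
  "a < N \<Longrightarrow> b < N \<Longrightarrow> (unit_mat N i j :: 'a::comm_ring_1 mat) $$ (a,b) = (if a = i - 1 \<and> b = j - 1 then 1 else 0)"
  unfolding unit_mat_def by simp

lemma psi_entry:
  assumes ab: "a < 2*n" "b < 2*n"
  shows "(psi_tilde n :: 'a::comm_ring_1 mat) $$ (a,b) =
    (if (even a \<and> b = a+1) \<or> (odd a \<and> a = b+1) then 1 else 0)"
proof -
  have "(psi_tilde n :: 'a mat) $$ (a,b) = (\<Sum>i\<in>{1..n}. (unit_mat (2*n) (2*i-1) (2*i) + unit_mat (2*n) (2*i) (2*i-1)) $$ (a,b))"
    unfolding psi_tilde_def using ab by simp
  also have "\<dots> = (\<Sum>i\<in>{1..n}. if i = a div 2 + 1 then (if (even a \<and> b = a+1) \<or> (odd a \<and> a = b+1) then 1 else 0) else (0::'a))"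
  proof (rule sum.cong[OF refl])
    fix i assume i: "i \<in> {1..n}"
    have i1: "1 \<le> i" using i by auto
    have c1: "(a = 2*i-1-1 \<and> b = 2*i-1) \<longleftrightarrow> (i = a div 2 + 1 \<and> even a \<and> b = a+1)" using i1 by (auto elim!: evenE)
    have c3: "(a = 2*i-1 \<and> b = 2*i-1-1) \<longleftrightarrow> (i = a div 2 + 1 \<and> odd a \<and> a = b+1)" using i1 by (auto elim!: oddE)
    have "(unit_mat (2*n) (2*i-1) (2*i) + unit_mat (2*n) (2*i) (2*i-1)) $$ (a,b) =
       (if a = 2*i-1-1 \<and> b = 2*i-1 then 1 else 0) + (if a = 2*i-1 \<and> b = 2*i-1-1 then (1::'a) else 0)"
      using ab by (simp only: index_add_mat unit_mat_dim unit_mat_entry)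
    also have "\<dots> = (if i = a div 2 + 1 then (if (even a \<and> b = a+1) \<or> (odd a \<and> a = b+1) then 1 else 0) else (0::'a))"
    proof (cases "even a")
      case True then show ?thesis unfolding c1 c3 by simp
    next
      case False then show ?thesis unfolding c1 c3 by simp
    qed
    finally show "(unit_mat (2*n) (2*i-1) (2*i) + unit_mat (2*n) (2*i) (2*i-1)) $$ (a,b) =
      (if i = a div 2 + 1 then (if (even a \<and> b = a+1) \<or> (odd a \<and> a = b+1) then 1 else 0) else (0::'a))" .
  qed
  also have "\<dots> = (if (even a \<and> b = a+1) \<or> (odd a \<and> a = b+1) then 1 else 0)"
  proof -
    have "a div 2 + 1 \<in> {1..n}" using ab by auto
    then show ?thesis by (simp only: sum.delta finite_atLeastAtMost if_True)
  qed
  finally show ?thesis .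
qed

lemma phi_dim[simp]: "dim_row (phi_tilde n) = 2*n+1" "dim_col (phi_tilde n) = 2*n+1"
  unfolding phi_tilde_def by auto

lemma phi_entry:
  assumes "i < 2*n+1" "j < 2*n+1"
  shows "(phi_tilde n :: 'a::comm_ring_1 mat) $$ (i,j) =
     (if i = 0 then (if j = 0 then 2 else 0) else if j \<noteq> 0 \<and> j = pp i then 1 else 0)"
  unfolding phi_tilde_def using assms by (auto simp: psi_entry pp_def; presburger)

lemma phiv:
  assumes a: "a \<in> carrier_vec (2*n+1)" and j: "j < 2*n+1"
  shows "(phi_tilde n *\<^sub>v a) $ j = (if j = 0 then 2 * a$0 else a $ pp j)"
proof -
  let ?t = "if j = 0 then 0 else pp j"
  have t: "?t < 2*n+1" using j pp_lt[of j n] by auto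
  have "(phi_tilde n *\<^sub>v a) $ j = (\<Sum>k\<in>{0..<2*n+1}. (phi_tilde n :: 'a mat) $$ (j,k) * a $ k)"
    using a j by (simp add: scalar_prod_def)
  also have "\<dots> = (\<Sum>k\<in>{0..<2*n+1}. if k = ?t then (if j = 0 then 2 * a$0 else a $ pp j) else 0)"
  proof (intro sum.cong refl)
    fix k assume k: "k \<in> {0..<2*n+1}"
    show "(phi_tilde n :: 'a mat) $$ (j,k) * a $ k = (if k = ?t then (if j = 0 then 2 * a$0 else a $ pp j) else 0)"
    proof (cases "j = 0")
      case True then show ?thesis using k j by (simp add: phi_entry)
    next
      case False
      then have "pp j \<noteq> 0" using pp_ge1[of j] by auto
      then show ?thesis using k j False by (auto simp: phi_entry)
    qed
  qed
  also have "\<dots> = (if j = 0 then 2 * a$0 else a $ pp j)"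
    using t by (simp only: sum.delta finite_atLeastLessThan atLeastLessThan_iff) simp
  finally show ?thesis .
qed

lemma bform_phi:
  assumes a: "a \<in> carrier_vec (2*n+1)" and b: "b \<in> carrier_vec (2*n+1)"
  shows "bform n a b = (\<Sum>i\<in>{0..<2*n+1}. a $ i * (phi_tilde n *\<^sub>v b) $ i)"
proof -
  have "dim_vec (phi_tilde n *\<^sub>v b) = 2*n+1" by simp
  then show ?thesis unfolding bform_def scalar_prod_def by (simp only:)
qed

lemma bform_eq:
  assumes a: "a \<in> carrier_vec (2*n+1)" and b: "b \<in> carrier_vec (2*n+1)"
  shows "bform n a b = 2 * a$0 * b$0 + (\<Sum>i\<in>{1..2*n}. a $ i * b $ pp i)"
proof -
  have e: "{0..<2*n+1} = insert 0 {1..2*n}" by auto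
  have "bform n a b = (\<Sum>i\<in>{0..<2*n+1}. a $ i * (if i = 0 then 2 * b$0 else b $ pp i))"
    unfolding bform_phi[OF a b] by (intro sum.cong refl) (auto simp: phiv[OF b] simp del: index_mult_mat_vec)
  also have "\<dots> = (\<Sum>i\<in>insert 0 {1..2*n}. a $ i * (if i = 0 then 2 * b$0 else b $ pp i))"
    by (simp only: e)
  also have "\<dots> = a $ 0 * (2 * b$0) + (\<Sum>i\<in>{1..2*n}. a $ i * (if i = 0 then 2 * b$0 else b $ pp i))"
    by (subst sum.insert) auto
  also have "(\<Sum>i\<in>{1..2*n}. a $ i * (if i = 0 then 2 * b$0 else b $ pp i)) = (\<Sum>i\<in>{1..2*n}. a $ i * b $ pp i)"
    by (intro sum.cong refl) auto
  finally show ?thesis by (simp add: mult.assoc mult.left_commute)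
qed

lemma sum_pp_swap:
  "(\<Sum>i\<in>{1..2*n}. (a::'a::comm_ring_1 vec) $ i * b $ pp i) = (\<Sum>i\<in>{1..2*n}. b $ i * a $ pp i)"
proof (rule sum.reindex_bij_witness[of _ pp pp])
  fix i assume i: "i \<in> {1..2*n}"
  show "pp (pp i) = i" using i pp_pp by auto
  show "pp i \<in> {1..2*n}" using i pp_range by blast
  show "b $ pp i * a $ pp (pp i) = a $ i * b $ pp i" using i pp_pp by (auto simp: mult.commute)
  show "pp (pp i) = i" using i pp_pp by auto
  show "pp i \<in> {1..2*n}" using i pp_range by blast
qed

lemma bform_sym:
  assumes a: "a \<in> carrier_vec (2*n+1)" and b: "b \<in> carrier_vec (2*n+1)"
  shows "bform n a b = bform n b a"
  using bform_eq[OF a b] bform_eq[OF b a] sum_pp_swap[where n=n and a=a and b=b] by (simp add: mult.commute)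

context
  fixes n N :: nat
  assumes N: "N = 2*n+1"
begin

lemma bform_eqN: "a \<in> carrier_vec N \<Longrightarrow> b \<in> carrier_vec N \<Longrightarrow> bform n a b = 2 * a$0 * b$0 + (\<Sum>i\<in>{1..2*n}. a $ i * b $ pp i)"
  using bform_eq N by blast

lemma bform_symN: "a \<in> carrier_vec N \<Longrightarrow> b \<in> carrier_vec N \<Longrightarrow> bform n a b = bform n b a"
  using bform_sym N by blast

lemma ppN: "i \<in> {1..2*n} \<Longrightarrow> pp i < N" "i \<in> {1..2*n} \<Longrightarrow> i < N"
  using pp_range[of i n] N by auto

lemma bform_add_left:
  assumes x: "x \<in> carrier_vec N" and y: "y \<in> carrier_vec N" and z: "z \<in> carrier_vec N"
  shows "bform n (x + y) z = bform n x z + bform n y z"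
proof -
  have "(\<Sum>i\<in>{1..2*n}. (x + y) $ i * z $ pp i) = (\<Sum>i\<in>{1..2*n}. x $ i * z $ pp i + y $ i * z $ pp i)"
    using y ppN by (intro sum.cong refl) (auto simp: algebra_simps)
  moreover have "(x + y) $ 0 = x $ 0 + y $ 0" using y N by simp
  ultimately show ?thesis using x y z by (simp add: bform_eqN sum.distrib algebra_simps)
qed

lemma bform_smult_left:
  assumes x: "x \<in> carrier_vec N" and z: "z \<in> carrier_vec N"
  shows "bform n (c \<cdot>\<^sub>v x) z = c * bform n x z"
proof -
  have "(\<Sum>i\<in>{1..2*n}. (c \<cdot>\<^sub>v x) $ i * z $ pp i) = (\<Sum>i\<in>{1..2*n}. c * (x $ i * z $ pp i))"
    using x ppN by (intro sum.cong refl) (auto simp: algebra_simps)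
  moreover have "(c \<cdot>\<^sub>v x) $ 0 = c * x $ 0" using x N by simp
  ultimately show ?thesis using x z by (simp add: bform_eqN sum_distrib_left algebra_simps)
qed

lemma bform_minus_left:
  assumes x: "x \<in> carrier_vec N" and y: "y \<in> carrier_vec N" and z: "z \<in> carrier_vec N"
  shows "bform n (x - y) z = bform n x z - bform n y z"
proof -
  have s: "(\<Sum>i\<in>{1..2*n}. (x - y) $ i * z $ pp i) = (\<Sum>i\<in>{1..2*n}. x $ i * z $ pp i) - (\<Sum>i\<in>{1..2*n}. y $ i * z $ pp i)"
    unfolding sum_subtractf[symmetric] using y ppN by (intro sum.cong refl) (auto simp: algebra_simps)
  have z0: "(x - y) $ 0 = x $ 0 - y $ 0" using y N by simp
  have "bform n (x - y) z = 2 * (x - y) $ 0 * z $ 0 + (\<Sum>i\<in>{1..2*n}. (x - y) $ i * z $ pp i)"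
    by (rule bform_eqN) (use x y z in auto)
  also have "\<dots> = (2 * x $ 0 * z $ 0 + (\<Sum>i\<in>{1..2*n}. x $ i * z $ pp i)) - (2 * y $ 0 * z $ 0 + (\<Sum>i\<in>{1..2*n}. y $ i * z $ pp i))"
    unfolding s z0 by (simp add: algebra_simps)
  also have "\<dots> = bform n x z - bform n y z" using x y z by (simp add: bform_eqN)
  finally show ?thesis .
qed

lemma bform_zero_left: "z \<in> carrier_vec N \<Longrightarrow> bform n (0\<^sub>v N) z = 0"
proof -
  assume z: "z \<in> carrier_vec N"
  have "(\<Sum>i\<in>{1..2*n}. (0\<^sub>v N :: 'a::comm_ring_1 vec) $ i * z $ pp i) = 0"
    using ppN by (intro sum.neutral) auto
  moreover have "(0\<^sub>v N :: 'a vec) $ 0 = 0" using N by simp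
  ultimately show ?thesis using z by (simp add: bform_eqN)
qed

lemma bform_add_right:
  "x \<in> carrier_vec N \<Longrightarrow> y \<in> carrier_vec N \<Longrightarrow> z \<in> carrier_vec N \<Longrightarrow> bform n z (x + y) = bform n z x + bform n z y"
  by (metis add_carrier_vec bform_add_left bform_symN)
lemma bform_minus_right:
  "x \<in> carrier_vec N \<Longrightarrow> y \<in> carrier_vec N \<Longrightarrow> z \<in> carrier_vec N \<Longrightarrow> bform n z (x - y) = bform n z x - bform n z y"
  by (metis minus_carrier_vec bform_minus_left bform_symN)
lemma bform_smult_right:
  "x \<in> carrier_vec N \<Longrightarrow> z \<in> carrier_vec N \<Longrightarrow> bform n z (c \<cdot>\<^sub>v x) = c * bform n z x"
  by (metis smult_carrier_vec bform_smult_left bform_symN)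
lemma bform_zero_right: "z \<in> carrier_vec N \<Longrightarrow> bform n z (0\<^sub>v N) = 0"
  by (metis zero_carrier_vec bform_zero_left bform_symN)

lemmas bform_lin = bform_add_left bform_add_right bform_minus_left bform_minus_right
  bform_smult_left bform_smult_right bform_zero_left bform_zero_right

lemma bform_unit_left:
  assumes x: "x \<in> carrier_vec N" and j: "j < N"
  shows "bform n (unit_vec N j) x = (if j = 0 then 2 * x$0 else x $ pp j)"
proof -
  have x': "x \<in> carrier_vec (2*n+1)" and j': "j < 2*n+1" using x j N by auto
  have "bform n (unit_vec (2*n+1) j) x = (\<Sum>i\<in>{0..<2*n+1}. (if i = j then (phi_tilde n *\<^sub>v x) $ i else 0))"
    unfolding bform_phi[OF unit_vec_carrier x'] using j' by (intro sum.cong refl) auto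
  also have "\<dots> = (phi_tilde n *\<^sub>v x) $ j" using j' by (simp add: sum.delta')
  also have "\<dots> = (if j = 0 then 2 * x$0 else x $ pp j)" using phiv[OF x' j'] .
  finally show ?thesis using N by simp
qed

lemma bform_unit_right:
  "x \<in> carrier_vec N \<Longrightarrow> j < N \<Longrightarrow> bform n x (unit_vec N j) = (if j = 0 then 2 * x$0 else x $ pp j)"
  using bform_unit_left bform_symN unit_vec_carrier by metis

lemma esd_carrier[simp]: "u \<in> carrier_vec N \<Longrightarrow> v \<in> carrier_vec N \<Longrightarrow> x \<in> carrier_vec N \<Longrightarrow> esd n u v x \<in> carrier_vec N"
  unfolding esd_def by simp

lemma esd_idx: "u \<in> carrier_vec N \<Longrightarrow> v \<in> carrier_vec N \<Longrightarrow> x \<in> carrier_vec N \<Longrightarrow> i < N \<Longrightarrow>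
  esd n u v x $ i = x $ i + bform n v x * u $ i - bform n u x * v $ i - qform n v * bform n u x * u $ i"
  unfolding esd_def by simp

lemma bform_esd_right:
  assumes "u \<in> carrier_vec N" "v \<in> carrier_vec N" "x \<in> carrier_vec N" "y \<in> carrier_vec N"
  shows "bform n y (esd n u v x) = bform n y x + bform n v x * bform n y u - bform n u x * bform n y v
     - qform n v * bform n u x * bform n y u"
  using assms unfolding esd_def by (simp add: bform_lin)

context
  fixes h :: "'a::comm_ring_1"
  assumes h2: "2 * h = 1"
begin

lemma qform_eq: "qform n (a::'a vec) = h * bform n a a"
  unfolding qform_def
proof (rule the_equality)
  show "2 * (h * bform n a a) = bform n a a" using h2 by (simp add: mult.assoc[symmetric])
  fix r assume r: "2 * r = bform n a a"
  have "r = (2 * h) * r" using h2 by simp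
  also have "\<dots> = h * (2 * r)" by (simp add: algebra_simps)
  also have "\<dots> = h * bform n a a" using r by simp
  finally show "r = h * bform n a a" .
qed

lemma bform_self: "bform n a a = 2 * qform n (a::'a vec)"
  using h2 by (simp add: qform_eq mult.assoc[symmetric])

lemma qform_add:
  fixes x y :: "'a vec"
  assumes x: "x \<in> carrier_vec N" and y: "y \<in> carrier_vec N"
  shows "qform n (x + y) = qform n x + qform n y + bform n x y"
proof -
  have "qform n (x + y) = h * (bform n x x + bform n y y + 2 * bform n x y)"
    using x y by (simp add: qform_eq bform_lin bform_symN[of y x] algebra_simps)
  also have "\<dots> = qform n x + qform n y + (2 * h) * bform n x y"
    by (simp add: qform_eq algebra_simps)
  finally show ?thesis using h2 by simp
qed

lemma qform_smult: "(x :: 'a vec) \<in> carrier_vec N \<Longrightarrow> qform n (c \<cdot>\<^sub>v x) = c * c * qform n x"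
  by (simp add: qform_eq bform_lin algebra_simps)

lemma qform_zero: "qform n (0\<^sub>v N :: 'a vec) = 0"
  by (simp add: qform_eq bform_lin)

end
end

context
  fixes n N :: nat
  assumes N: "N = 2*n+1"
  fixes h :: "'a::comm_ring_1"
  assumes h2: "2 * h = 1"
begin

lemma esd_dim[simp]: "dim_vec (esd n u v x) = dim_vec u"
  by (simp add: esd_def)

lemma bform_esd_right':
  assumes "(u::'a vec) \<in> carrier_vec N" "v \<in> carrier_vec N" "x \<in> carrier_vec N" "y \<in> carrier_vec N"
  shows "bform n y (esd n u v x) = bform n y x + bform n v x * bform n u y - bform n u x * bform n v y
     - qform n v * bform n u x * bform n u y"
  using bform_esd_right[OF N assms] assms bform_symN[OF N] by metis

lemma bform_esd_left':
  assumes "(u::'a vec) \<in> carrier_vec N" "v \<in> carrier_vec N" "x \<in> carrier_vec N" "y \<in> carrier_vec N"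
  shows "bform n (esd n u v x) y = bform n x y + bform n v x * bform n u y - bform n u x * bform n v y
     - qform n v * bform n u x * bform n u y"
  using bform_esd_right'[OF assms] assms bform_symN[OF N] esd_carrier[OF N] by metis

lemma esd_add:
  assumes u: "(u::'a vec) \<in> carrier_vec N" and v: "(v::'a vec) \<in> carrier_vec N" and w: "(w::'a vec) \<in> carrier_vec N" and x: "(x::'a vec) \<in> carrier_vec N"
    and qu: "qform n u = 0" and uv: "bform n u v = 0" and uw: "bform n u w = 0"
  shows "esd n u v (esd n u w x) = esd n u (v + w) x"
proof (rule eq_vecI)
  have vu: "bform n v u = 0" using uv bform_symN[OF N u v] by simp
  have wu: "bform n w u = 0" using uw bform_symN[OF N u w] by simp
  have uu: "bform n u u = 0" using qu bform_self[OF N h2] by simp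
  have wv: "bform n w v = bform n v w" using bform_symN[OF N v w] by simp
  fix i assume "i < dim_vec (esd n u (v + w) x)"
  then have i: "i < N" using u v w x N esd_carrier[OF N] by (metis add_carrier_vec carrier_vecD)
  show "esd n u v (esd n u w x) $ i = esd n u (v + w) x $ i"
    using u v w x i vu wu uu wv uv uw
    by (simp add: esd_idx[OF N] bform_esd_right'[of _ _ _] bform_lin[OF N] qform_add[OF N h2] esd_carrier[OF N] algebra_simps)
next
  show "dim_vec (esd n u v (esd n u w x)) = dim_vec (esd n u (v + w) x)"
    using u v w x esd_carrier[OF N] by (metis add_carrier_vec carrier_vecD)
qed

lemma esd_zero:
  assumes u: "(u::'a vec) \<in> carrier_vec N" and x: "(x::'a vec) \<in> carrier_vec N"
  shows "esd n u (0\<^sub>v N) x = x"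
proof (rule eq_vecI)
  fix i assume "i < dim_vec x"
  then have i: "i < N" using x by simp
  show "esd n u (0\<^sub>v N) x $ i = x $ i"
    using u x i by (simp add: esd_idx[OF N] bform_lin[OF N] qform_zero[OF N h2])
qed (use u x in auto)

lemma esd_self:
  assumes u: "(u::'a vec) \<in> carrier_vec N" and x: "(x::'a vec) \<in> carrier_vec N" and qu: "qform n u = 0"
  shows "esd n u (c \<cdot>\<^sub>v u) x = x"
proof (rule eq_vecI)
  fix i assume "i < dim_vec x"
  then have i: "i < N" using x by simp
  show "esd n u (c \<cdot>\<^sub>v u) x $ i = x $ i"
    using u x i qu by (simp add: esd_idx[OF N] bform_lin[OF N] qform_smult[OF N h2] algebra_simps)
qed (use u x in auto)

lemma esd_scale:
  assumes u: "(u::'a vec) \<in> carrier_vec N" and v: "(v::'a vec) \<in> carrier_vec N" and x: "(x::'a vec) \<in> carrier_vec N"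
  shows "esd n (c \<cdot>\<^sub>v u) v x = esd n u (c \<cdot>\<^sub>v v) x"
proof (rule eq_vecI)
  fix i assume "i < dim_vec (esd n u (c \<cdot>\<^sub>v v) x)"
  then have i: "i < N" using u v x esd_carrier[OF N] by (metis smult_carrier_vec carrier_vecD)
  show "esd n (c \<cdot>\<^sub>v u) v x $ i = esd n u (c \<cdot>\<^sub>v v) x $ i"
    using u v x i by (simp add: esd_idx[OF N] bform_lin[OF N] qform_smult[OF N h2] algebra_simps)
next
  show "dim_vec (esd n (c \<cdot>\<^sub>v u) v x) = dim_vec (esd n u (c \<cdot>\<^sub>v v) x)"
    using u v x esd_carrier[OF N] by (metis smult_carrier_vec carrier_vecD)
qed

lemma esd_pres:
  assumes u: "(u::'a vec) \<in> carrier_vec N" and v: "(v::'a vec) \<in> carrier_vec N" and x: "(x::'a vec) \<in> carrier_vec N" and y: "(y::'a vec) \<in> carrier_vec N"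
    and qu: "qform n u = 0" and uv: "bform n u v = 0"
  shows "bform n (esd n u v x) (esd n u v y) = bform n x y"
proof -
  have vu: "bform n v u = 0" using uv bform_symN[OF N u v] by simp
  have uu: "bform n u u = 0" using qu bform_self[OF N h2] by simp
  have vv: "bform n v v = 2 * qform n v" using bform_self[OF N h2] by simp
  show ?thesis
    using u v x y vu uu uv vv
    by (simp add: bform_esd_left' bform_esd_right' esd_carrier[OF N] algebra_simps)
qed

lemma esd_qpres:
  assumes u: "(u::'a vec) \<in> carrier_vec N" and v: "(v::'a vec) \<in> carrier_vec N" and x: "(x::'a vec) \<in> carrier_vec N"
    and qu: "qform n u = 0" and uv: "bform n u v = 0"
  shows "qform n (esd n u v x) = qform n x"
  using esd_pres[OF u v x x qu uv] by (simp add: qform_eq[OF N h2])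

lemma esd_conj:
  assumes a: "(a::'a vec) \<in> carrier_vec N" and b: "(b::'a vec) \<in> carrier_vec N" and u: "(u::'a vec) \<in> carrier_vec N" and v: "(v::'a vec) \<in> carrier_vec N" and x: "(x::'a vec) \<in> carrier_vec N"
    and qa: "qform n a = 0" and ab: "bform n a b = 0"
  shows "esd n a b (esd n u v x) = esd n (esd n a b u) (esd n a b v) (esd n a b x)"
proof (rule eq_vecI)
  fix i assume "i < dim_vec (esd n (esd n a b u) (esd n a b v) (esd n a b x))"
  then have i: "i < N" using a b u v x esd_carrier[OF N] by (metis carrier_vecD)
  have e1: "bform n (esd n a b v) (esd n a b x) = bform n v x" using esd_pres[OF a b v x qa ab] .
  have e2: "bform n (esd n a b u) (esd n a b x) = bform n u x" using esd_pres[OF a b u x qa ab] .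
  have e3: "qform n (esd n a b v) = qform n v" using esd_qpres[OF a b v qa ab] .
  have c1: "esd n a b u \<in> carrier_vec N" "esd n a b v \<in> carrier_vec N" "esd n a b x \<in> carrier_vec N"
    using a b u v x esd_carrier[OF N] by auto
  have r: "esd n (esd n a b u) (esd n a b v) (esd n a b x) $ i =
     esd n a b x $ i + bform n v x * esd n a b u $ i - bform n u x * esd n a b v $ i
     - qform n v * bform n u x * esd n a b u $ i"
    using esd_idx[OF N c1 i] e1 e2 e3 by simp
  have s1: "bform n u b = bform n b u" "bform n v b = bform n b v" "bform n u a = bform n a u" "bform n v a = bform n a v"
    using bform_symN[OF N] a b u v by auto
  show "esd n a b (esd n u v x) $ i = esd n (esd n a b u) (esd n a b v) (esd n a b x) $ i"
    unfolding r using a b u v x i s1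
    by (simp add: esd_idx[OF N] bform_esd_right' esd_carrier[OF N] algebra_simps)
next
  show "dim_vec (esd n a b (esd n u v x)) = dim_vec (esd n (esd n a b u) (esd n a b v) (esd n a b x))"
    using a b u v x esd_carrier[OF N] by (metis carrier_vecD)
qed

end

lemma unit_mat_carrier[simp]: "unit_mat N i j \<in> carrier_mat N N"
  unfolding unit_mat_def by auto

lemma F1_carrier: "F1 s i c \<in> carrier_mat (2*s+1) (2*s+1)"
  unfolding F1_def by (intro add_carrier_mat smult_carrier_mat minus_carrier_mat) auto
lemma F2_carrier: "F2 s i c \<in> carrier_mat (2*s+1) (2*s+1)"
  unfolding F2_def by (intro add_carrier_mat smult_carrier_mat minus_carrier_mat) auto

lemma gens_carrier: "g \<in> EO_gens s \<Longrightarrow> g \<in> carrier_mat (2*s+1) (2*s+1)"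
  unfolding EO_gens_def using F1_carrier F2_carrier by blast

lemma EO_carrier: "A \<in> EO s \<Longrightarrow> A \<in> carrier_mat (2*s+1) (2*s+1)"
proof (induction rule: EO.induct)
  case EO_one then show ?case by simp
next
  case (EO_gen g M) then show ?case using gens_carrier[OF EO_gen(1)] by (metis mult_carrier_mat)
next
  case (EO_inv g h M) then show ?case by (metis mult_carrier_mat)
qed

lemma EO_mult: "A \<in> EO s \<Longrightarrow> B \<in> EO s \<Longrightarrow> A * B \<in> EO s"
proof (induction rule: EO.induct)
  case EO_one
  then show ?case using EO_carrier left_mult_one_mat by metis
next
  case (EO_gen g M)
  have "g * M * B = g * (M * B)"
    using gens_carrier[OF EO_gen(1)] EO_carrier[OF EO_gen(2)] EO_carrier[OF EO_gen(4)] by simp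
  then show ?case using EO.EO_gen[OF EO_gen(1) EO_gen(3)[OF EO_gen(4)]] by simp
next
  case (EO_inv g h M)
  have "h * M * B = h * (M * B)"
    using EO_inv(2) EO_carrier[OF EO_inv(5)] EO_carrier[OF EO_inv(7)] by simp
  then show ?case using EO.EO_inv[OF EO_inv(1,2,3,4) EO_inv(6)[OF EO_inv(7)]] by simp
qed

definition inEO :: "nat \<Rightarrow> ('a::comm_ring_1 vec \<Rightarrow> 'a vec) \<Rightarrow> bool" where
  "inEO s f \<longleftrightarrow> (\<exists>A\<in>EO s. \<forall>x\<in>carrier_vec (2*s+1). A *\<^sub>v x = f x)"

context
  fixes n N :: nat
  assumes N: "N = 2*n+1"
begin

lemma inEO_iff: "inEO n f \<longleftrightarrow> (\<exists>A\<in>EO n. \<forall>x\<in>carrier_vec N. A *\<^sub>v x = f x)"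
  unfolding inEO_def N ..

lemma EO_carrierN: "A \<in> EO n \<Longrightarrow> A \<in> carrier_mat N N"
  using EO_carrier N by blast

lemma inEO_comp:
  assumes f: "inEO n f" and g: "inEO n g" and gc: "\<And>x. x \<in> carrier_vec N \<Longrightarrow> g x \<in> carrier_vec N"
  shows "inEO n (\<lambda>x. f (g x))"
proof -
  obtain A where A: "A \<in> EO n" "\<And>x. x \<in> carrier_vec N \<Longrightarrow> A *\<^sub>v x = f x" using f inEO_iff by blast
  obtain B where B: "B \<in> EO n" "\<And>x. x \<in> carrier_vec N \<Longrightarrow> B *\<^sub>v x = g x" using g inEO_iff by blast
  have "\<forall>x\<in>carrier_vec N. (A * B) *\<^sub>v x = f (g x)"
  proof
    fix x :: "'a vec" assume x: "x \<in> carrier_vec N"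
    have "(A * B) *\<^sub>v x = A *\<^sub>v (B *\<^sub>v x)"
      using EO_carrierN[OF A(1)] EO_carrierN[OF B(1)] x by simp
    also have "\<dots> = f (g x)" using A(2) B(2) gc x by simp
    finally show "(A * B) *\<^sub>v x = f (g x)" .
  qed
  then show ?thesis using EO_mult[OF A(1) B(1)] inEO_iff by blast
qed

lemma inEO_cong: "inEO n f \<Longrightarrow> (\<And>x. x \<in> carrier_vec N \<Longrightarrow> f x = g x) \<Longrightarrow> inEO n g"
  using inEO_iff by metis

lemma inEO_id: "inEO n (\<lambda>x::'a::comm_ring_1 vec. x)"
proof -
  have "1\<^sub>m N \<in> EO n" using EO.EO_one[of n] N by simp
  moreover have "\<forall>x\<in>carrier_vec N. 1\<^sub>m N *\<^sub>v x = (x::'a vec)" by simp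
  ultimately show ?thesis unfolding inEO_iff by blast
qed

lemma inEO_esd_mat:
  assumes u: "(u :: 'a::comm_ring_1 vec) \<in> carrier_vec N" and v: "v \<in> carrier_vec N" and f: "inEO n (esd n u v)"
  shows "esd_mat n u v \<in> EO n"
proof -
  obtain A where A: "A \<in> EO n" "\<And>x. x \<in> carrier_vec N \<Longrightarrow> A *\<^sub>v x = esd n u v x" using f inEO_iff by blast
  have Ac: "A \<in> carrier_mat N N" using EO_carrierN[OF A(1)] .
  have "A = esd_mat n u v"
  proof (rule eq_matI)
    show "dim_row A = dim_row (esd_mat n u v)" "dim_col A = dim_col (esd_mat n u v)"
      using Ac N by (auto simp: esd_mat_def)
    fix i j assume "i < dim_row (esd_mat n u v)" "j < dim_col (esd_mat n u v)"
    then have i: "i < N" and j: "j < N" using N by (auto simp: esd_mat_def)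
    have "A $$ (i,j) = (A *\<^sub>v unit_vec N j) $ i" using Ac i j by simp
    also have "\<dots> = esd n u v (unit_vec N j) $ i" using A(2) j by simp
    also have "\<dots> = esd_mat n u v $$ (i,j)"
      unfolding esd_mat_def N[symmetric] using i j by (simp add: mat_of_cols_index)
    finally show "A $$ (i,j) = esd_mat n u v $$ (i,j)" .
  qed
  then show ?thesis using A(1) by simp
qed

lemma esd_mat_mult:
  assumes u: "(u :: 'a::comm_ring_1 vec) \<in> carrier_vec N" and v: "v \<in> carrier_vec N" and x: "x \<in> carrier_vec N"
  shows "esd_mat n u v *\<^sub>v x = esd n u v x"
proof (rule eq_vecI)
  have expand: "(\<Sum>j\<in>{0..<N}. bform n y (unit_vec N j) * x $ j) = bform n y x" if y: "y \<in> carrier_vec N" for y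
  proof -
    have y': "y \<in> carrier_vec (2*n+1)" and x': "x \<in> carrier_vec (2*n+1)" using x y N by auto
    have "bform n y x = bform n x y" using bform_symN[OF N x y] ..
    also have "\<dots> = (\<Sum>j\<in>{0..<N}. x $ j * (phi_tilde n *\<^sub>v y) $ j)" using bform_phi[OF x' y'] N by simp
    also have "\<dots> = (\<Sum>j\<in>{0..<N}. bform n y (unit_vec N j) * x $ j)"
    proof (intro sum.cong refl)
      fix j assume "j \<in> {0..<N}"
      then have j: "j < N" and j': "j < 2*n+1" using N by auto
      show "x $ j * (phi_tilde n *\<^sub>v y) $ j = bform n y (unit_vec N j) * x $ j"
        unfolding bform_unit_right[OF N y j] phiv[OF y' j'] by (simp add: mult.commute)
    qed
    finally show ?thesis by simp
  qed
  fix r assume "r < dim_vec (esd n u v x)"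
  then have r: "r < N" using u by (simp add: esd_def)
  have "(esd_mat n u v *\<^sub>v x) $ r = (\<Sum>j\<in>{0..<N}. esd n u v (unit_vec N j) $ r * x $ j)"
    using r x unfolding esd_mat_def N[symmetric] by (simp add: scalar_prod_def mat_of_cols_index)
  also have "\<dots> = (\<Sum>j\<in>{0..<N}. (if j = r then x $ j else 0) + u $ r * (bform n v (unit_vec N j) * x $ j)
       - v $ r * (bform n u (unit_vec N j) * x $ j) - qform n v * u $ r * (bform n u (unit_vec N j) * x $ j))"
    using u v r by (intro sum.cong refl) (auto simp: esd_idx[OF N] algebra_simps)
  also have "\<dots> = x $ r + u $ r * bform n v x - v $ r * bform n u x - qform n v * u $ r * bform n u x"
    using r u v by (simp add: sum.distrib sum_subtractf sum_distrib_left[symmetric] expand)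
  also have "\<dots> = esd n u v x $ r" using esd_idx[OF N u v x r] by (simp add: algebra_simps)
  finally show "(esd_mat n u v *\<^sub>v x) $ r = esd n u v x $ r" .
next
  show "dim_vec (esd_mat n u v *\<^sub>v x) = dim_vec (esd n u v x)" using u N by (simp add: esd_mat_def esd_def)
qed

end

lemma EO_gen_mem: "g \<in> EO_gens s \<Longrightarrow> g \<in> EO s"
  using EO.EO_gen[OF _ EO.EO_one, of g s] gens_carrier[of g s] right_mult_one_mat by metis

context
  fixes n N :: nat
  assumes N: "N = 2*n+1"
  fixes h :: "'a::comm_ring_1"
  assumes h2: "2 * h = 1"
begin

abbreviation e :: "nat \<Rightarrow> 'a vec" where "e j \<equiv> unit_vec N j"

lemma e_carrier[simp]: "e j \<in> carrier_vec N" by simp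

lemma Q_e0: "qform n (e 0) = 1"
  using qform_eq[OF N h2, of "e 0"] bform_unit_left[OF N, of "e 0" 0] N h2 by (simp add: mult.commute)

lemma Q_ea: "a \<in> {1..2*n} \<Longrightarrow> qform n (e a) = 0"
  using qform_eq[OF N h2, of "e a"] bform_unit_left[OF N, of "e a" a] N pp_neq[of a] ppN[OF N] by auto

lemma pp_odd: "1 \<le> i \<Longrightarrow> pp (2*i-1) = 2*i" unfolding pp_def by presburger
lemma pp_even: "1 \<le> i \<Longrightarrow> pp (2*i) = 2*i-1" unfolding pp_def by presburger

lemma F1_eq:
  assumes i: "1 \<le> i" "i \<le> n"
  shows "F1 n i c = esd_mat n (e (2*i-1)) ((-c) \<cdot>\<^sub>v e 0)"
proof (rule eq_matI)
  show "dim_row (F1 n i c) = dim_row (esd_mat n (e (2*i-1)) ((-c) \<cdot>\<^sub>v e 0))"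
       "dim_col (F1 n i c) = dim_col (esd_mat n (e (2*i-1)) ((-c) \<cdot>\<^sub>v e 0))"
    using F1_carrier[of n i c] by (auto simp: esd_mat_def)
  fix r j assume "r < dim_row (esd_mat n (e (2*i-1)) ((-c) \<cdot>\<^sub>v e 0))" "j < dim_col (esd_mat n (e (2*i-1)) ((-c) \<cdot>\<^sub>v e 0))"
  then have r: "r < N" and j: "j < N" using N by (auto simp: esd_mat_def)
  have a1: "2*i-1 < N" "2*i < N" "2*i-1 \<noteq> 0" "2*i \<noteq> 0" "2*i \<noteq> 2*i-1" using i N by auto
  have L: "F1 n i c $$ (r,j) = (if r = j then 1 else 0) + c * ((if r = 0 \<and> j = 2*i then 1 else 0)
     - 2 * (if r = 2*i-1 \<and> j = 0 then 1 else 0) - c * (if r = 2*i-1 \<and> j = 2*i then 1 else 0))"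
    unfolding F1_def N[symmetric] using r j by (simp add: unit_mat_entry)
  have R0: "esd_mat n (e (2*i-1)) ((-c) \<cdot>\<^sub>v e 0) $$ (r,j) = esd n (e (2*i-1)) ((-c) \<cdot>\<^sub>v e 0) (e j) $ r"
    unfolding esd_mat_def N[symmetric] using r j by (simp add: mat_of_cols_index)
  have R1: "esd n (e (2*i-1)) ((-c) \<cdot>\<^sub>v e 0) (e j) $ r = e j $ r + bform n ((-c) \<cdot>\<^sub>v e 0) (e j) * e (2*i-1) $ r
     - bform n (e (2*i-1)) (e j) * ((-c) \<cdot>\<^sub>v e 0) $ r - qform n ((-c) \<cdot>\<^sub>v e 0) * bform n (e (2*i-1)) (e j) * e (2*i-1) $ r"
    by (rule esd_idx[OF N]) (auto simp: r)
  have b1: "bform n ((-c) \<cdot>\<^sub>v e 0) (e j) = -c * (if j = 0 then 2 else 0)"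
    using bform_smult_left[OF N, of "e 0" "e j" "-c"] bform_unit_left[OF N, of "e j" 0] N j by simp
  have b2: "bform n (e (2*i-1)) (e j) = (if j = 2*i then 1 else 0)"
    using bform_unit_left[OF N, of "e j" "2*i-1"] a1 j pp_odd[OF i(1)] by simp
  have q: "qform n ((-c) \<cdot>\<^sub>v e 0) = c * c" using qform_smult[OF N h2, of "e 0" "-c"] Q_e0 by simp
  have ix: "e j $ r = (if r = j then 1 else 0)" "e (2*i-1) $ r = (if r = 2*i-1 then 1 else 0)"
     "((-c) \<cdot>\<^sub>v e 0) $ r = -c * (if r = 0 then 1 else 0)" using r j a1 N by auto
  show "F1 n i c $$ (r,j) = esd_mat n (e (2*i-1)) ((-c) \<cdot>\<^sub>v e 0) $$ (r,j)"
    unfolding L R0 R1 b1 b2 q ix using a1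
    by (cases "r = 0"; cases "j = 0"; cases "r = 2*i-1"; cases "j = 2*i"; simp)
qed

lemma F2_eq:
  assumes i: "1 \<le> i" "i \<le> n"
  shows "F2 n i c = esd_mat n (e (2*i)) ((-c) \<cdot>\<^sub>v e 0)"
proof (rule eq_matI)
  show "dim_row (F2 n i c) = dim_row (esd_mat n (e (2*i)) ((-c) \<cdot>\<^sub>v e 0))"
       "dim_col (F2 n i c) = dim_col (esd_mat n (e (2*i)) ((-c) \<cdot>\<^sub>v e 0))"
    using F2_carrier[of n i c] by (auto simp: esd_mat_def)
  fix r j assume "r < dim_row (esd_mat n (e (2*i)) ((-c) \<cdot>\<^sub>v e 0))" "j < dim_col (esd_mat n (e (2*i)) ((-c) \<cdot>\<^sub>v e 0))"
  then have r: "r < N" and j: "j < N" using N by (auto simp: esd_mat_def)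
  have a1: "2*i-1 < N" "2*i < N" "2*i-1 \<noteq> 0" "2*i \<noteq> 0" "2*i \<noteq> 2*i-1" using i N by auto
  have L: "F2 n i c $$ (r,j) = (if r = j then 1 else 0) + c * ((if r = 0 \<and> j = 2*i-1 then 1 else 0)
     - 2 * (if r = 2*i \<and> j = 0 then 1 else 0) - c * (if r = 2*i \<and> j = 2*i-1 then 1 else 0))"
    unfolding F2_def N[symmetric] using r j by (simp add: unit_mat_entry)
  have R0: "esd_mat n (e (2*i)) ((-c) \<cdot>\<^sub>v e 0) $$ (r,j) = esd n (e (2*i)) ((-c) \<cdot>\<^sub>v e 0) (e j) $ r"
    unfolding esd_mat_def N[symmetric] using r j by (simp add: mat_of_cols_index)
  have R1: "esd n (e (2*i)) ((-c) \<cdot>\<^sub>v e 0) (e j) $ r = e j $ r + bform n ((-c) \<cdot>\<^sub>v e 0) (e j) * e (2*i) $ r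
     - bform n (e (2*i)) (e j) * ((-c) \<cdot>\<^sub>v e 0) $ r - qform n ((-c) \<cdot>\<^sub>v e 0) * bform n (e (2*i)) (e j) * e (2*i) $ r"
    by (rule esd_idx[OF N]) (auto simp: r)
  have b1: "bform n ((-c) \<cdot>\<^sub>v e 0) (e j) = -c * (if j = 0 then 2 else 0)"
    using bform_smult_left[OF N, of "e 0" "e j" "-c"] bform_unit_left[OF N, of "e j" 0] N j by simp
  have b2: "bform n (e (2*i)) (e j) = (if j = 2*i-1 then 1 else 0)"
    using bform_unit_left[OF N, of "e j" "2*i"] a1 j pp_even[OF i(1)] by simp
  have q: "qform n ((-c) \<cdot>\<^sub>v e 0) = c * c" using qform_smult[OF N h2, of "e 0" "-c"] Q_e0 by simp
  have ix: "e j $ r = (if r = j then 1 else 0)" "e (2*i) $ r = (if r = 2*i then 1 else 0)"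
     "((-c) \<cdot>\<^sub>v e 0) $ r = -c * (if r = 0 then 1 else 0)" using r j a1 N by auto
  show "F2 n i c $$ (r,j) = esd_mat n (e (2*i)) ((-c) \<cdot>\<^sub>v e 0) $$ (r,j)"
    unfolding L R0 R1 b1 b2 q ix using a1
    by (cases "r = 0"; cases "j = 0"; cases "r = 2*i"; cases "j = 2*i-1"; simp)
qed

lemma gen:
  assumes a: "a \<in> {1..2*n}"
  shows "inEO n (esd n (e a) (c \<cdot>\<^sub>v e 0))"
proof -
  obtain g where g: "g \<in> EO_gens n" "g = esd_mat n (e a) (c \<cdot>\<^sub>v e 0)"
  proof (cases "odd a")
    case True
    define i where "i = (a + 1) div 2"
    have i: "1 \<le> i" "i \<le> n" "2*i-1 = a" using a True unfolding i_def by (auto elim!: oddE)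
    have "F1 n i (-c) \<in> EO_gens n" unfolding EO_gens_def using i by blast
    moreover have "F1 n i (-c) = esd_mat n (e a) (c \<cdot>\<^sub>v e 0)" using F1_eq[OF i(1,2), of "-c"] i(3) by simp
    ultimately show ?thesis using that by blast
  next
    case False
    define i where "i = a div 2"
    have i: "1 \<le> i" "i \<le> n" "2*i = a" using a False unfolding i_def by (auto elim!: evenE)
    have "F2 n i (-c) \<in> EO_gens n" unfolding EO_gens_def using i by blast
    moreover have "F2 n i (-c) = esd_mat n (e a) (c \<cdot>\<^sub>v e 0)" using F2_eq[OF i(1,2), of "-c"] i(3) by simp
    ultimately show ?thesis using that by blast
  qed
  have "\<forall>x\<in>carrier_vec N. g *\<^sub>v x = esd n (e a) (c \<cdot>\<^sub>v e 0) x"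
    using g(2) esd_mat_mult[OF N, of "e a" "c \<cdot>\<^sub>v e 0"] by auto
  then show ?thesis using EO_gen_mem[OF g(1)] inEO_iff[OF N] by blast
qed

lemma Be_left: "x \<in> carrier_vec N \<Longrightarrow> a \<in> {1..2*n} \<Longrightarrow> bform n (e a) x = x $ pp a"
  using bform_unit_left[OF N, of x a] N by auto

lemma long_root:
  assumes a: "a \<in> {1..2*n}" and b: "b \<in> {1..2*n}" and ba: "b \<noteq> a" and bpa: "b \<noteq> pp a"
  shows "inEO n (esd n (e a) (y \<cdot>\<^sub>v e b))"
proof -
  define t where "t = h * y"
  have t2: "2 * t = y" using h2 unfolding t_def by (simp add: mult.assoc[symmetric])
  define g where "g = esd n (e b) (t \<cdot>\<^sub>v e 0)"
  define gi where "gi = esd n (e b) ((-t) \<cdot>\<^sub>v e 0)"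
  have aN: "a < N" "pp a < N" "pp a \<noteq> 0" "a \<noteq> 0" using a ppN[OF N] pp_ge1[of a] by auto
  have bN: "b < N" "pp b < N" "pp b \<noteq> 0" "b \<noteq> 0" using b ppN[OF N] pp_ge1[of b] by auto
  have pba: "pp b \<noteq> a" using bpa pp_pp[of b] b by auto
  have Qb: "qform n (e b) = 0" using Q_ea[OF b] .
  have Bb0: "bform n (e b) (t \<cdot>\<^sub>v e 0) = 0" "bform n (e b) ((-t) \<cdot>\<^sub>v e 0) = 0"
    using Be_left[OF _ b] bN by auto
  have Ba0: "bform n (e a) (c \<cdot>\<^sub>v e 0) = 0" for c
    using Be_left[OF _ a] aN by auto
  have Ba00: "bform n (e a) (e 0) = 0" using Ba0[of 1] by simp
  have Bab: "bform n (e a) (c \<cdot>\<^sub>v e b) = 0" for c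
    using Be_left[OF _ a] aN bN bpa by auto
  have gea: "g (e a) = e a"
    unfolding g_def
  proof (rule eq_vecI)
    fix i assume "i < dim_vec (e a)"
    then have i: "i < N" by simp
    show "esd n (e b) (t \<cdot>\<^sub>v e 0) (e a) $ i = e a $ i"
      using i aN bN pba by (simp add: esd_idx[OF N] bform_lin[OF N] bform_unit_left[OF N] Be_left[OF _ b])
  qed (simp add: esd_def)
  have ge0: "g (1 \<cdot>\<^sub>v e 0) = 1 \<cdot>\<^sub>v e 0 + (2 * t) \<cdot>\<^sub>v e b"
    unfolding g_def
  proof (rule eq_vecI)
    fix i assume "i < dim_vec (1 \<cdot>\<^sub>v e 0 + (2 * t) \<cdot>\<^sub>v e b)"
    then have i: "i < N" by simp
    show "esd n (e b) (t \<cdot>\<^sub>v e 0) (1 \<cdot>\<^sub>v e 0) $ i = (1 \<cdot>\<^sub>v e 0 + (2 * t) \<cdot>\<^sub>v e b) $ i"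
      using i aN bN by (simp add: esd_idx[OF N] bform_lin[OF N] bform_unit_left[OF N] Be_left[OF _ b] algebra_simps)
  qed (simp add: esd_def)
  have inv: "g (gi x) = x" if x: "x \<in> carrier_vec N" for x
  proof -
    have "g (gi x) = esd n (e b) (t \<cdot>\<^sub>v e 0 + (-t) \<cdot>\<^sub>v e 0) x"
      unfolding g_def gi_def using esd_add[OF N h2 _ _ _ x Qb Bb0] by simp
    also have "t \<cdot>\<^sub>v e 0 + (-t) \<cdot>\<^sub>v e 0 = (0\<^sub>v N :: 'a vec)"
      by (rule eq_vecI) auto
    finally show ?thesis using esd_zero[OF N h2 _ x] by simp
  qed
  have key: "esd n (e a) (y \<cdot>\<^sub>v e b) x = esd n (e a) ((-1) \<cdot>\<^sub>v e 0) (g (esd n (e a) (1 \<cdot>\<^sub>v e 0) (gi x)))"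
    if x: "x \<in> carrier_vec N" for x
  proof -
    have gix: "gi x \<in> carrier_vec N" unfolding gi_def by (rule esd_carrier[OF N]) (auto simp: x)
    have "g (esd n (e a) (1 \<cdot>\<^sub>v e 0) (gi x)) = esd n (g (e a)) (g (1 \<cdot>\<^sub>v e 0)) (g (gi x))"
      unfolding g_def using esd_conj[OF N h2 _ _ _ _ gix Qb Bb0(1)] by simp
    also have "\<dots> = esd n (e a) (1 \<cdot>\<^sub>v e 0 + (2 * t) \<cdot>\<^sub>v e b) x" using gea ge0 inv[OF x] by simp
    finally have 1: "g (esd n (e a) (1 \<cdot>\<^sub>v e 0) (gi x)) = esd n (e a) (1 \<cdot>\<^sub>v e 0 + (2 * t) \<cdot>\<^sub>v e b) x" .
    have B2: "bform n (e a) (1 \<cdot>\<^sub>v e 0 + (2 * t) \<cdot>\<^sub>v e b) = 0"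
      using bform_add_right[OF N, of "1 \<cdot>\<^sub>v e 0" "(2 * t) \<cdot>\<^sub>v e b" "e a"] Ba0 Bab Ba00 by simp
    have "esd n (e a) ((-1) \<cdot>\<^sub>v e 0) (esd n (e a) (1 \<cdot>\<^sub>v e 0 + (2 * t) \<cdot>\<^sub>v e b) x)
        = esd n (e a) ((-1) \<cdot>\<^sub>v e 0 + (1 \<cdot>\<^sub>v e 0 + (2 * t) \<cdot>\<^sub>v e b)) x"
      using esd_add[OF N h2 _ _ _ x Q_ea[OF a] Ba0 B2] by simp
    also have "(-1) \<cdot>\<^sub>v e 0 + (1 \<cdot>\<^sub>v e 0 + (2 * t) \<cdot>\<^sub>v e b) = y \<cdot>\<^sub>v e b"
      by (rule eq_vecI) (auto simp: t2)
    finally show ?thesis using 1 by simp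
  qed
  have gc: "\<And>x. x \<in> carrier_vec N \<Longrightarrow> esd n u v x \<in> carrier_vec N" if "u \<in> carrier_vec N" "v \<in> carrier_vec N" for u v
    using esd_carrier[OF N] that by blast
  have "inEO n (\<lambda>x. esd n (e a) ((-1) \<cdot>\<^sub>v e 0) (g (esd n (e a) (1 \<cdot>\<^sub>v e 0) (gi x))))"
  proof -
    have i1: "inEO n g" unfolding g_def using gen[OF b] .
    have i2: "inEO n gi" unfolding gi_def using gen[OF b] .
    have i3: "inEO n (esd n (e a) (1 \<cdot>\<^sub>v e 0))" using gen[OF a] .
    have i4: "inEO n (esd n (e a) ((-1) \<cdot>\<^sub>v e 0))" using gen[OF a] .
    have "inEO n (\<lambda>x. esd n (e a) (1 \<cdot>\<^sub>v e 0) (gi x))"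
      by (rule inEO_comp[OF N i3 i2]) (simp add: gi_def gc)
    then have "inEO n (\<lambda>x. g (esd n (e a) (1 \<cdot>\<^sub>v e 0) (gi x)))"
      by (rule inEO_comp[OF N i1]) (simp add: gi_def gc)
    then show ?thesis
      by (rule inEO_comp[OF N i4]) (simp add: g_def gi_def gc)
  qed
  then show ?thesis using key inEO_cong[OF N] by (metis (no_types, lifting))
qed

end

context
  fixes n N :: nat
  assumes N: "N = 2*n+1"
  fixes h :: "'a::comm_ring_1"
  assumes h2: "2 * h = 1"
begin

lemma short_all:
  assumes a: "a \<in> {1..2*n}" and v: "(v::'a vec) \<in> carrier_vec N" and av: "bform n (e N a) v = 0"
  shows "inEO n (esd n (e N a) v)"
proof -
  define vk where "vk k = vec N (\<lambda>j. if j < k then v$j else 0)" for k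
  have aN: "a < N" "pp a < N" "pp a \<noteq> a" "a \<noteq> 0" using a ppN[OF N] pp_neq[of a] by auto
  have vpa: "v $ pp a = 0" using av Be_left[OF N h2 v a] by simp
  have vk_c: "vk k \<in> carrier_vec N" for k by (simp add: vk_def)
  have Bvk: "bform n (e N a) (vk k) = 0" for k
    using Be_left[OF N h2 vk_c a] aN vpa by (simp add: vk_def)
  have Bvke: "bform n (e N a) ((v$k) \<cdot>\<^sub>v e N k) = 0" if k: "k < N" for k
    using Be_left[OF N h2 _ a, of "(v$k) \<cdot>\<^sub>v e N k"] aN vpa k by auto
  have idf: "inEO n f" if "\<And>x. x \<in> carrier_vec N \<Longrightarrow> x = f x" for f
    using inEO_cong[OF N inEO_id[OF N]] that by blast
  have step: "inEO n (esd n (e N a) ((v$k) \<cdot>\<^sub>v e N k))" if k: "k < N" for k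
  proof -
    consider "k = 0" | "k = a" | "k = pp a" | "k \<in> {1..2*n}" "k \<noteq> a" "k \<noteq> pp a" using k N by force
    then show ?thesis
    proof cases
      case 1 then show ?thesis using gen[OF N h2 a] by simp
    next
      case 2 then show ?thesis using esd_self[OF N h2 _ _ Q_ea[OF N h2 a]] by (intro idf) simp
    next
      case 3
      then have "(v$k) \<cdot>\<^sub>v e N k = 0\<^sub>v N" using vpa by auto
      then show ?thesis using esd_zero[OF N h2] by (intro idf) simp
    next
      case 4 then show ?thesis using long_root[OF N h2 a] by simp
    qed
  qed
  have ind: "k \<le> N \<Longrightarrow> inEO n (esd n (e N a) (vk k))" for k
  proof (induction k)
    case 0
    have "vk 0 = 0\<^sub>v N" by (auto simp: vk_def)
    then show ?case using esd_zero[OF N h2] by (intro idf) simp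
  next
    case (Suc k)
    then have k: "k < N" by simp
    have vs: "vk (Suc k) = vk k + (v$k) \<cdot>\<^sub>v e N k"
      by (rule eq_vecI) (auto simp: vk_def k less_Suc_eq)
    have "inEO n (\<lambda>x. esd n (e N a) (vk k) (esd n (e N a) ((v$k) \<cdot>\<^sub>v e N k) x))"
      by (rule inEO_comp[OF N Suc.IH[OF less_imp_le[OF k]] step[OF k]]) (auto intro!: esd_carrier[OF N])
    moreover have "esd n (e N a) (vk k) (esd n (e N a) ((v$k) \<cdot>\<^sub>v e N k) x) = esd n (e N a) (vk (Suc k)) x"
      if x: "x \<in> carrier_vec N" for x
      unfolding vs using esd_add[OF N h2 _ vk_c _ x Q_ea[OF N h2 a] Bvk Bvke[OF k]] by simp
    ultimately show ?case using inEO_cong[OF N] by blast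
  qed
  have "vk N = v" using v by (auto simp: vk_def)
  then show ?thesis using ind[of N] by simp
qed

end

definition goodP :: "nat \<Rightarrow> 'a::comm_ring_1 vec \<Rightarrow> bool" where
  "goodP n u \<longleftrightarrow> (\<forall>v\<in>carrier_vec (2*n+1). bform n u v = 0 \<longrightarrow> inEO n (esd n u v))"

context
  fixes n N :: nat
  assumes N: "N = 2*n+1"
  fixes h :: "'a::comm_ring_1"
  assumes h2: "2 * h = 1"
begin

lemma goodP_iff: "goodP n u \<longleftrightarrow> (\<forall>v\<in>carrier_vec N. bform n u v = 0 \<longrightarrow> inEO n (esd n u v))"
  unfolding goodP_def N ..

lemma reduce:
  assumes a: "(a::'a vec) \<in> carrier_vec N" and b: "b \<in> carrier_vec N" and qa: "qform n a = 0" and ab: "bform n a b = 0"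
    and ia: "inEO n (esd n a b)" and ib: "inEO n (esd n a ((-1) \<cdot>\<^sub>v b))"
    and u: "u \<in> carrier_vec N" and g: "goodP n (esd n a b u)"
  shows "goodP n u"
  unfolding goodP_iff
proof (intro ballI impI)
  fix v assume v: "v \<in> carrier_vec N" and uv: "bform n u v = 0"
  have c: "esd n a b u \<in> carrier_vec N" "esd n a b v \<in> carrier_vec N" using a b u v esd_carrier[OF N] by auto
  have "bform n (esd n a b u) (esd n a b v) = 0" using esd_pres[OF N h2 a b u v qa ab] uv by simp
  then have i1: "inEO n (esd n (esd n a b u) (esd n a b v))" using g c(2) unfolding goodP_iff by blast
  have ab': "bform n a ((-1) \<cdot>\<^sub>v b) = 0" using bform_smult_right[OF N b a] ab by simp
  have key: "esd n u v x = esd n a ((-1) \<cdot>\<^sub>v b) (esd n (esd n a b u) (esd n a b v) (esd n a b x))"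
    if x: "x \<in> carrier_vec N" for x
  proof -
    have "esd n (esd n a b u) (esd n a b v) (esd n a b x) = esd n a b (esd n u v x)"
      using esd_conj[OF N h2 a b u v x qa ab] by simp
    moreover have "esd n a ((-1) \<cdot>\<^sub>v b) (esd n a b y) = y" if y: "y \<in> carrier_vec N" for y
    proof -
      have "esd n a ((-1) \<cdot>\<^sub>v b) (esd n a b y) = esd n a ((-1) \<cdot>\<^sub>v b + b) y"
        using esd_add[OF N h2 a _ b y qa ab' ab] b by simp
      also have "(-1) \<cdot>\<^sub>v b + b = 0\<^sub>v N" using b by (intro eq_vecI) auto
      finally show ?thesis using esd_zero[OF N h2 a y] by simp
    qed
    moreover have "esd n u v x \<in> carrier_vec N" by (rule esd_carrier[OF N u v x])
    ultimately show ?thesis by simp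
  qed
  have "inEO n (\<lambda>x. esd n a ((-1) \<cdot>\<^sub>v b) (esd n (esd n a b u) (esd n a b v) (esd n a b x)))"
  proof -
    have "inEO n (\<lambda>x. esd n (esd n a b u) (esd n a b v) (esd n a b x))"
      by (rule inEO_comp[OF N i1 ia]) (auto intro!: esd_carrier[OF N] a b)
    then show ?thesis
      by (rule inEO_comp[OF N ib]) (auto intro!: esd_carrier[OF N] a b c)
  qed
  then show "inEO n (esd n u v)" using key inEO_cong[OF N] by (metis (no_types, lifting))
qed

lemma scaled:
  assumes a: "a \<in> {1..2*n}"
  shows "goodP n (c \<cdot>\<^sub>v e N a :: 'a vec)"
  unfolding goodP_iff
proof (intro ballI impI)
  fix v :: "'a vec" assume v: "v \<in> carrier_vec N" and cv: "bform n (c \<cdot>\<^sub>v e N a) v = 0"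
  have "bform n (e N a) (c \<cdot>\<^sub>v v) = c * bform n (e N a) v" using bform_smult_right[OF N v, of "e N a"] by simp
  also have "\<dots> = bform n (c \<cdot>\<^sub>v e N a) v" using bform_smult_left[OF N _ v, of "e N a"] by simp
  finally have "bform n (e N a) (c \<cdot>\<^sub>v v) = 0" using cv by simp
  then have "inEO n (esd n (e N a) (c \<cdot>\<^sub>v v))" using short_all[OF N h2 a] v by simp
  moreover have "esd n (e N a) (c \<cdot>\<^sub>v v) x = esd n (c \<cdot>\<^sub>v e N a) v x" if "x \<in> carrier_vec N" for x
    using esd_scale[OF N h2 _ v that] by simp
  ultimately show "inEO n (esd n (c \<cdot>\<^sub>v e N a) v)" using inEO_cong[OF N] by blast
qed

lemma unit2:
  assumes n1: "1 \<le> n" and u: "(u::'a vec) \<in> carrier_vec N" and qu: "qform n u = 0" and eps: "u $ 2 * \<epsilon> = 1"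
  shows "goodP n u"
proof -
  have one: "1 \<in> {1..2*n}" and two: "2 \<in> {1..2*n}" using n1 by auto
  have i12: "1 < N" "2 < N" using n1 N by auto
  have pp1: "pp 1 = 2" and pp2: "pp 2 = 1" by (auto simp: pp_def)
  define w where "w = vec N (\<lambda>j. if j = 1 \<or> j = 2 then 0 else u $ j * \<epsilon>)"
  have w: "w \<in> carrier_vec N" by (simp add: w_def)
  have w12: "w $ 1 = 0" "w $ 2 = 0" using i12 by (auto simp: w_def)
  have B1w: "bform n (e N 1) w = 0" using Be_left[OF N h2 w one] pp1 w12 by simp
  have B1w': "bform n (e N 1) ((-1) \<cdot>\<^sub>v w) = 0" using bform_smult_right[OF N w, of "e N 1"] B1w by simp
  have i1: "inEO n (esd n (e N 1) w)" using short_all[OF N h2 one w B1w] .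
  have i2: "inEO n (esd n (e N 1) ((-1) \<cdot>\<^sub>v w))" using short_all[OF N h2 one _ B1w'] w by simp
  define u' where "u' = esd n (e N 1) w u"
  have u'c: "u' \<in> carrier_vec N" unfolding u'_def by (rule esd_carrier[OF N]) (auto simp: w u)
  have Q1: "qform n (e N 1 :: 'a vec) = 0" using Q_ea[OF N h2 one] .
  have B1u: "bform n (e N 1) u = u $ 2" using Be_left[OF N h2 u one] pp1 by simp
  define z where "z = u' $ 1"
  have u'eq: "u' = z \<cdot>\<^sub>v e N 1 + u $ 2 \<cdot>\<^sub>v e N 2"
  proof (rule eq_vecI)
    fix j assume "j < dim_vec (z \<cdot>\<^sub>v e N 1 + u $ 2 \<cdot>\<^sub>v e N 2)"
    then have j: "j < N" by simp
    have "u' $ j = u $ j + bform n w u * e N 1 $ j - u $ 2 * w $ j - qform n w * u $ 2 * e N 1 $ j"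
      unfolding u'_def using esd_idx[OF N _ w u j] B1u by simp
    moreover have "u $ j - u $ 2 * (u $ j * \<epsilon>) = 0"
    proof -
      have "u $ 2 * (u $ j * \<epsilon>) = u $ j * (u $ 2 * \<epsilon>)" by (simp only: mult.left_commute)
      then show ?thesis using eps by simp
    qed
    ultimately show "u' $ j = (z \<cdot>\<^sub>v e N 1 + u $ 2 \<cdot>\<^sub>v e N 2) $ j"
      using j i12 w12 unfolding z_def by (auto simp: w_def)
  qed (simp add: u'_def esd_def)
  have "qform n u' = 0" unfolding u'_def using esd_qpres[OF N h2 _ w u Q1 B1w] qu by simp
  then have "bform n u' u' = 0" using bform_self[OF N h2, of u'] by simp
  moreover have "bform n u' u' = 2 * z * u $ 2"
    unfolding u'eq using i12 pp1 pp2
    by (simp add: bform_lin[OF N] bform_unit_left[OF N] algebra_simps)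
  ultimately have "2 * z * u $ 2 = 0" by simp
  then have "z = 0"
  proof -
    assume a: "2 * z * u $ 2 = 0"
    have "z = z * ((2 * h) * (u $ 2 * \<epsilon>))" using h2 eps by simp
    also have "\<dots> = h * \<epsilon> * (2 * z * u $ 2)" by (simp add: algebra_simps)
    finally show "z = 0" using a by simp
  qed
  then have "u' = u $ 2 \<cdot>\<^sub>v e N 2" unfolding u'eq by (intro eq_vecI) auto
  then have "goodP n (esd n (e N 1) w u)" using scaled[OF two] unfolding u'_def by simp
  then show ?thesis using reduce[OF _ w Q1 B1w i1 i2 u] by simp
qed

end

context
  fixes n N :: nat
  assumes N: "N = 2*n+1"
  fixes h :: "'a::comm_ring_1"
  assumes h2: "2 * h = 1"
begin

lemma Bm:
  assumes I: "ring_ideal m" and d: "(d::'a vec) \<in> carrier_vec N" and y: "y \<in> carrier_vec N"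
    and dm: "\<And>j. j < N \<Longrightarrow> d $ j \<in> m"
  shows "bform n d y \<in> m"
proof -
  have "d $ 0 \<in> m" using dm N by simp
  then have "2 * d $ 0 \<in> m" using ideal_multl[OF I] by blast
  then have "2 * d $ 0 * y $ 0 \<in> m" using ideal_multr[OF I] by blast
  moreover have "(\<Sum>i\<in>{1..2*n}. d $ i * y $ pp i) \<in> m"
    using I by (rule ideal_sum) (auto intro!: ideal_multr[OF I] dm simp: ppN[OF N])
  ultimately show ?thesis using bform_eqN[OF N d y] ideal_add[OF I] by simp
qed

lemma make_unit:
  assumes fin: "finite {m::'a set. maximal_ideal m}" and n1: "1 \<le> n" and u: "(u::'a vec) \<in> carrier_vec N"
    and um: "unimodular u" and qu: "qform n u = 0"
  shows "\<exists>w\<in>carrier_vec N. w $ 1 = 0 \<and> w $ 2 = 0 \<and> (\<exists>\<epsilon>. esd n (e N 2) w u $ 2 * \<epsilon> = 1)"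
proof -
  let ?M = "{m::'a set. maximal_ideal m}"
  have i12: "0 < N" "1 < N" "2 < N" using n1 N by auto
  have one: "1 \<in> {1..2*n}" and two: "2 \<in> {1..2*n}" using n1 by auto
  have pp1: "pp 1 = 2" and pp2: "pp 2 = 1" by (auto simp: pp_def)
  define f where "f w = u $ 2 + bform n w u - qform n w * u $ 1" for w
  have B2u: "bform n (e N 2) u = u $ 1" using Be_left[OF N h2 u two] pp2 by simp
  have fesd: "esd n (e N 2) w u $ 2 = f w" if w: "w \<in> carrier_vec N" "w $ 2 = 0" for w
    using esd_idx[OF N _ w(1) u i12(3)] B2u w(2) i12 unfolding f_def by simp
  have "\<forall>m\<in>?M. \<exists>x. x - 1 \<in> m \<and> (\<forall>m'\<in>?M - {m}. x \<in> m')"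
    using separator[OF fin] by blast
  then obtain em where em: "\<And>m. m \<in> ?M \<Longrightarrow> em m - 1 \<in> m \<and> (\<forall>m'\<in>?M - {m}. em m \<in> m')" by metis
  define wm where "wm m = (if u $ 2 \<notin> m then (0\<^sub>v N :: 'a vec) else if (\<exists>c\<in>{3..2*n}. u $ c \<notin> m)
     then e N (pp (SOME c. c \<in> {3..2*n} \<and> u $ c \<notin> m)) else e N 0)" for m
  have ppc: "pp c \<in> {1..2*n}" "pp c \<noteq> 1" "pp c \<noteq> 2" "pp c < N" "pp (pp c) = c" if c: "c \<in> {3..2*n}" for c
  proof -
    have c': "c \<in> {1..2*n}" using c by auto
    show "pp c \<in> {1..2*n}" "pp c < N" using pp_range[OF c'] ppN[OF N c'] by auto
    have c3: "3 \<le> c" using c by auto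
    show "pp c \<noteq> 1" "pp c \<noteq> 2" using c3 unfolding pp_def by presburger+
    show "pp (pp c) = c" using pp_pp[of c] c by auto
  qed
  have wm_c: "wm m \<in> carrier_vec N" for m by (simp add: wm_def)
  have wm_12: "wm m $ 1 = 0 \<and> wm m $ 2 = 0" for m
  proof (cases "u $ 2 \<notin> m")
    case True then show ?thesis using i12 by (simp add: wm_def)
  next
    case False
    show ?thesis
    proof (cases "\<exists>c\<in>{3..2*n}. u $ c \<notin> m")
      case True
      define c0 where "c0 = (SOME c. c \<in> {3..2*n} \<and> u $ c \<notin> m)"
      have c0: "c0 \<in> {3..2*n}" using True unfolding c0_def by (metis (mono_tags, lifting) someI_ex)
      have w: "wm m = e N (pp c0)" using False True unfolding wm_def c0_def by simp
      have "pp c0 \<noteq> 1" "pp c0 \<noteq> 2" "pp c0 < N" using ppc[OF c0] by auto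
      then show ?thesis using w i12 by simp
    next
      case F2: False
      then show ?thesis using False i12 by (simp add: wm_def)
    qed
  qed
  have local: "f (wm m) \<notin> m" if mM: "m \<in> ?M" for m
  proof -
    have mx: "maximal_ideal m" using mM by simp
    have I: "ring_ideal m" using max_ideal[OF mx] .
    show ?thesis
    proof (cases "u $ 2 \<notin> m")
      case True
      then show ?thesis unfolding f_def wm_def using bform_zero_left[OF N u] qform_zero[OF N h2] by simp
    next
      case False
      show ?thesis
      proof (cases "\<exists>c\<in>{3..2*n}. u $ c \<notin> m")
        case True
        define c0 where "c0 = (SOME c. c \<in> {3..2*n} \<and> u $ c \<notin> m)"
        have c0: "c0 \<in> {3..2*n}" "u $ c0 \<notin> m" using True unfolding c0_def by (metis (mono_tags, lifting) someI_ex)+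
        have w: "wm m = e N (pp c0)" using False True unfolding wm_def c0_def by simp
        have "f (wm m) = u $ 2 + u $ c0"
          unfolding f_def w using Be_left[OF N h2 u ppc(1)[OF c0(1)]] ppc(5)[OF c0(1)] Q_ea[OF N h2 ppc(1)[OF c0(1)]] by simp
        moreover have "u $ 2 + u $ c0 \<notin> m"
        proof
          assume "u $ 2 + u $ c0 \<in> m"
          then have "(u $ 2 + u $ c0) - u $ 2 \<in> m" using ideal_diff[OF I] False by blast
          then show False using c0 by simp
        qed
        ultimately show ?thesis by simp
      next
        case F2: False
        have w: "wm m = e N 0" using False F2 unfolding wm_def by simp
        have f0: "f (wm m) = u $ 2 + 2 * u $ 0 - u $ 1"
          unfolding f_def w using bform_unit_left[OF N u i12(1)] Q_e0[OF N h2] by simp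
        have u2: "u $ 2 \<in> m" using False by simp
        have uc: "u $ c \<in> m" if "c \<in> {3..2*n}" for c using F2 that by blast
        have u0: "u $ 0 \<in> m"
        proof -
          have "bform n u u = 0" using bform_self[OF N h2, of u] qu by simp
          then have eq: "2 * u $ 0 * u $ 0 = - (\<Sum>i\<in>{1..2*n}. u $ i * u $ pp i)"
            using bform_eqN[OF N u u] by (simp add: eq_neg_iff_add_eq_0)
          have "(\<Sum>i\<in>{1..2*n}. u $ i * u $ pp i) \<in> m"
          proof (rule ideal_sum[OF I], simp)
            fix i assume i: "i \<in> {1..2*n}"
            show "u $ i * u $ pp i \<in> m"
            proof (cases "i = 1")
              case True then show ?thesis using u2 pp1 ideal_multl[OF I] by simp
            next
              case False
              then have "i = 2 \<or> i \<in> {3..2*n}" using i by auto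
              then have "u $ i \<in> m" using u2 uc by auto
              then show ?thesis using ideal_multr[OF I] by simp
            qed
          qed
          then have "2 * u $ 0 * u $ 0 \<in> m" using eq ideal_neg[OF I] by simp
          then have "h * (2 * u $ 0 * u $ 0) \<in> m" using ideal_multl[OF I] by simp
          moreover have "h * (2 * u $ 0 * u $ 0) = u $ 0 * u $ 0"
          proof -
            have "h * (2 * u $ 0 * u $ 0) = (2 * h) * (u $ 0 * u $ 0)" by (simp only: ac_simps)
            then show ?thesis using h2 by simp
          qed
          ultimately have "u $ 0 * u $ 0 \<in> m" by simp
          then show ?thesis using max_prime[OF mx] by blast
        qed
        have u1: "u $ 1 \<notin> m"
        proof
          assume u1: "u $ 1 \<in> m"
          have all: "u $ j \<in> m" if "j < N" for j
          proof -
            have "j = 0 \<or> j = 1 \<or> j = 2 \<or> j \<in> {3..2*n}" using that N by auto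
            then show ?thesis using u0 u1 u2 uc by auto
          qed
          obtain z where z: "dim_vec z = dim_vec u" "u \<bullet> z = 1" using um unfolding unimodular_def by blast
          have "u \<bullet> z = (\<Sum>j\<in>{0..<dim_vec z}. u $ j * z $ j)" by (simp add: scalar_prod_def)
          also have "\<dots> \<in> m" using z(1) u by (intro ideal_sum[OF I]) (auto intro!: ideal_multr[OF I] all)
          finally show False using z(2) max_one[OF mx] by simp
        qed
        show ?thesis
        proof
          assume "f (wm m) \<in> m"
          then have "(u $ 2 + 2 * u $ 0) - f (wm m) \<in> m"
            using ideal_diff[OF I] ideal_add[OF I u2] ideal_multl[OF I u0] by blast
          then show False using u1 f0 by simp
        qed
      qed
    qed
  qed
  define w where "w = vec N (\<lambda>j. \<Sum>m'\<in>?M. em m' * wm m' $ j)"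
  have wc: "w \<in> carrier_vec N" by (simp add: w_def)
  have w12: "w $ 1 = 0" "w $ 2 = 0" using i12 wm_12 by (auto simp: w_def)
  have diff: "f w - f (wm m) \<in> m" if mM: "m \<in> ?M" for m
  proof -
    have mx: "maximal_ideal m" using mM by simp
    have I: "ring_ideal m" using max_ideal[OF mx] .
    define d where "d = w - wm m"
    have dc: "d \<in> carrier_vec N" using wc wm_c unfolding d_def by simp
    have dm: "d $ j \<in> m" if j: "j < N" for j
    proof -
      have "d $ j = (\<Sum>m'\<in>?M. em m' * wm m' $ j) - wm m $ j" using j wm_c[of m] by (simp add: d_def w_def)
      also have "\<dots> = (em m - 1) * wm m $ j + (\<Sum>m'\<in>?M - {m}. em m' * wm m' $ j)"
        using sum.remove[OF fin mM, of "\<lambda>m'. em m' * wm m' $ j"] by (simp add: algebra_simps)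
      also have "\<dots> \<in> m"
      proof (rule ideal_add[OF I])
        show "(em m - 1) * wm m $ j \<in> m" using em[OF mM] ideal_multr[OF I] by blast
        show "(\<Sum>m'\<in>?M - {m}. em m' * wm m' $ j) \<in> m"
        proof (rule ideal_sum[OF I])
          show "finite (?M - {m})" using fin by simp
          fix m' assume m': "m' \<in> ?M - {m}"
          then have "em m' \<in> m" using em[of m'] mM by auto
          then show "em m' * wm m' $ j \<in> m" using ideal_multr[OF I] by blast
        qed
      qed
      finally show ?thesis .
    qed
    have "f w - f (wm m) = bform n d u - h * bform n d (w + wm m) * u $ 1"
    proof -
      have e1: "bform n w u - bform n (wm m) u = bform n d u"
        unfolding d_def using bform_minus_left[OF N wc wm_c u] by simp
      have e2: "bform n d (w + wm m) = bform n w w - bform n (wm m) (wm m)"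
        unfolding d_def using wc wm_c bform_symN[OF N wc wm_c]
        by (simp add: bform_lin[OF N])
      show ?thesis unfolding f_def e2 using e1 qform_eq[OF N h2, of w] qform_eq[OF N h2, of "wm m"]
        by (simp add: algebra_simps)
    qed
    also have "\<dots> \<in> m"
      using Bm[OF I dc u dm] Bm[OF I dc _ dm, of "w + wm m"] wc wm_c ideal_diff[OF I] ideal_multl[OF I] ideal_multr[OF I]
      by (metis add_carrier_vec mult.assoc)
    finally show ?thesis .
  qed
  have "\<exists>\<epsilon>. f w * \<epsilon> = 1"
  proof (rule unit_of_not_max)
    fix m :: "'a set" assume mx: "maximal_ideal m"
    then have mM: "m \<in> ?M" by simp
    show "f w \<notin> m"
    proof
      assume "f w \<in> m"
      then have "f w - (f w - f (wm m)) \<in> m" using ideal_diff[OF max_ideal[OF mx]] diff[OF mM] by blast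
      then show False using local[OF mM] by simp
    qed
  qed
  then obtain \<epsilon> where eps: "f w * \<epsilon> = 1" by blast
  have "esd n (e N 2) w u $ 2 * \<epsilon> = 1" using fesd[OF wc w12(2)] eps by simp
  then show ?thesis using wc w12 by blast
qed

lemma goodP_all:
  assumes fin: "finite {m::'a set. maximal_ideal m}" and n1: "1 \<le> n" and u: "(u::'a vec) \<in> carrier_vec N"
    and um: "unimodular u" and qu: "qform n u = 0"
  shows "goodP n u"
proof -
  obtain w \<epsilon> where w: "w \<in> carrier_vec N" "w $ 1 = 0" "w $ 2 = 0" and eps: "esd n (e N 2) w u $ 2 * \<epsilon> = 1"
    using make_unit[OF fin n1 u um qu] by blast
  have two: "2 \<in> {1..2*n}" using n1 by auto
  have pp2: "pp 2 = 1" by (auto simp: pp_def)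
  have Q2: "qform n (e N 2 :: 'a vec) = 0" using Q_ea[OF N h2 two] .
  have B2w: "bform n (e N 2) w = 0" using Be_left[OF N h2 w(1) two] pp2 w(2) by simp
  have B2w': "bform n (e N 2) ((-1) \<cdot>\<^sub>v w) = 0" using bform_smult_right[OF N w(1), of "e N 2"] B2w by simp
  have i1: "inEO n (esd n (e N 2) w)" using short_all[OF N h2 two w(1) B2w] .
  have i2: "inEO n (esd n (e N 2) ((-1) \<cdot>\<^sub>v w))" using short_all[OF N h2 two _ B2w'] w by simp
  have u'c: "esd n (e N 2) w u \<in> carrier_vec N" by (rule esd_carrier[OF N]) (auto simp: w u)
  have "qform n (esd n (e N 2) w u) = 0" using esd_qpres[OF N h2 _ w(1) u Q2 B2w] qu by simp
  then have "goodP n (esd n (e N 2) w u)" using unit2[OF N h2 n1 u'c _ eps] by simp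
  then show ?thesis using reduce[OF N h2 _ w(1) Q2 B2w i1 i2 u] by simp
qed

end

theorem mainTheorem8:
  fixes u v :: "'a::comm_ring_1 vec" and n :: nat
  assumes "semilocal TYPE('a)"
    and "(2::'a) dvd 1"
    and "n \<ge> 3"
    and "u \<in> carrier_vec (2*n+1)" and "v \<in> carrier_vec (2*n+1)"
    and "unimodular u" and "qform n u = 0" and "bform n u v = 0"
  shows "esd_mat n u v \<in> EO n"
proof -
  obtain k :: 'a where k: "1 = 2 * k" using assms(2) unfolding dvd_def by blast
  have h2: "2 * k = 1" using k by simp
  have fin: "finite {m::'a set. maximal_ideal m}" using assms(1) unfolding semilocal_def .
  have n1: "1 \<le> n" using assms(3) by simp
  have "goodP n u" using goodP_all[OF refl h2 fin n1 assms(4,6,7)] .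
  then have "inEO n (esd n u v)" using assms(5,8) unfolding goodP_def by blast
  then show ?thesis using inEO_esd_mat[OF refl assms(4,5)] by blast
qed

end
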